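(* There exists a constant $\eta>0$ such that for all $r>0$ and all $c_1,c_2\in\mathbb{R}^2$ with $\|c_1-c_2\|\ge 2r$, setting $B_1=B(c_1,r)$, $B_2=B(c_2,r)$, $$\mathbb P\big(\partial Y_1\cap(B_1\cup B_2)=\emptyset\big)\le \eta\, e^{-2(1+\frac{2}{\pi})r}.$$
   Context: $Y_1$ is the stationary isotropic planar STIT tessellation at time $1$: with $\Lambda$ the motion-invariant measure on the set of lines $\mathcal H$ normalized by $\Lambda(\{H: H\cap B(0,1)\neq\emptyset\})=2$, the tessellation restricted to any bounded convex polygon $W$ is obtained by starting from $\{W\}$ and letting each cell $z$ independently live an exponential time with parameter $\Lambda(\{H:H\cap z\neq\emptyset\})$ and then split along a random line distributed as $\Lambda$ restricted to lines hitting $z$ and normalized, up to time $1$. $\partial Y_1$ denotes the skeleton (union of cell boundaries) and $B(c,r)$ the closed disk of center $c$ and radius $r$. *)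

theory Defs
  imports "HOL-Analysis.Analysis"
begin

(* Lines in the plane (identified with complex numbers) are parametrised by
   (theta, p) with theta in [0,pi), p real:  H(theta,p) = {x. x . e^{i theta} = p}. *)
definition stit_line :: "real \<Rightarrow> real \<Rightarrow> complex set" where
  "stit_line \<theta> p = {x. x \<bullet> cis \<theta> = p}"

definition stit_lower :: "real \<Rightarrow> real \<Rightarrow> complex set" where
  "stit_lower \<theta> p = {x. x \<bullet> cis \<theta> \<le> p}"

definition stit_upper :: "real \<Rightarrow> real \<Rightarrow> complex set" where
  "stit_upper \<theta> p = {x. x \<bullet> cis \<theta> \<ge> p}"

definition hitting :: "complex set \<Rightarrow> (real \<times> real) set" where
  "hitting z = {q \<in> {0..<pi} \<times> UNIV. stit_line (fst q) (snd q) \<inter> z \<noteq> {}}"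

(* Lambda = (1/pi) d theta dp : the motion invariant line measure with
   Lambda(lines hitting B(0,1)) = 2.  Lambda([z]) : *)
definition Lam :: "complex set \<Rightarrow> real" where
  "Lam z = measure lborel (hitting z) / pi"

(* One step of the recursive STIT construction, for the event that no
   segment cut up to the remaining time t hits the set A.
   F z t = probability that the STIT in cell z, run for time t, puts no
   cut through A.  The cell lives Exp(Lam z) time s, is then cut by a line
   with law Lambda restricted to [z] normalised; the cut segment must avoid A,
   and the two children evolve independently for the remaining time t - s. *)
definition stit_step ::
  "complex set \<Rightarrow> (complex set \<Rightarrow> real \<Rightarrow> ennreal) \<Rightarrow> complex set \<Rightarrow> real \<Rightarrow> ennreal" where
  "stit_step A F z t =
     ennreal (exp (- Lam z * t)) +
     (\<integral>\<^sup>+ s. indicator {0..t} s *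
        (\<integral>\<^sup>+ q. indicator (hitting z) q *
            indicator {q. stit_line (fst q) (snd q) \<inter> z \<inter> A = {}} q *
            ennreal (exp (- Lam z * s) / pi) *
            F (z \<inter> stit_lower (fst q) (snd q)) (t - s) *
            F (z \<inter> stit_upper (fst q) (snd q)) (t - s) \<partial>lborel) \<partial>lborel)"

(* P( skeleton of the STIT in window W at time t does not meet A ), for A inside
   the interior of W: the least fixed point of the recursion (= the probability,
   since only finitely many splits occur before time t almost surely). *)
definition stit_avoid_prob :: "complex set \<Rightarrow> real \<Rightarrow> complex set \<Rightarrow> ennreal" where
  "stit_avoid_prob W t A = lfp (stit_step A) W t"

end

theory Submission
  imports Defs
begin

lemma hitting_eq:
  "hitting K = ({0..<pi} \<times> UNIV) \<inter> (\<lambda>(x,\<theta>). (\<theta>, x \<bullet> cis \<theta>)) ` (K \<times> {0..pi})"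
  unfolding hitting_def stit_line_def by (auto simp: image_iff)

lemma hit_meas:
  assumes "compact K"
  shows "hitting K \<in> sets lborel" "emeasure lborel (hitting K) < \<infinity>"
proof -
  let ?C = "(\<lambda>(x,\<theta>). (\<theta>, x \<bullet> cis \<theta>)) ` (K \<times> {0..pi})"
  have cC: "compact ?C"
    apply (rule compact_continuous_image)
     apply (auto intro!: continuous_intros simp: case_prod_unfold)
    using assms compact_Times compact_Icc by blast
  have b1: "({0..<pi} \<times> (UNIV::real set)) \<in> sets borel"
  proof -
    have "({0..<pi} \<times> (UNIV::real set)) = {q. 0 \<le> fst q} \<inter> {q::real\<times>real. fst q < pi}" by auto
    moreover have "closed {q::real\<times>real. 0 \<le> fst q}" by (intro closed_Collect_le continuous_intros)
    moreover have "open {q::real\<times>real. fst q < pi}" by (intro open_Collect_less continuous_intros)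
    ultimately show ?thesis by (metis borel_closed borel_open sets.Int)
  qed
  show "hitting K \<in> sets lborel" unfolding hitting_eq sets_lborel
    using b1 borel_compact[OF cC] by (rule sets.Int)
  have "emeasure lborel (hitting K) \<le> emeasure lborel ?C"
    unfolding hitting_eq by (intro emeasure_mono) (auto simp: borel_compact[OF cC])
  also have "\<dots> < \<infinity>" using emeasure_compact_finite[OF cC] .
  finally show "emeasure lborel (hitting K) < \<infinity>" .
qed

lemma closed_lower: "closed (stit_lower \<theta> p)" unfolding stit_lower_def
  by (intro closed_Collect_le continuous_intros)
lemma closed_upper: "closed (stit_upper \<theta> p)" unfolding stit_upper_def
  by (intro closed_Collect_le continuous_intros)

lemma Lam_subadd:
  assumes "compact K"
  shows "Lam K \<le> Lam (K \<inter> stit_lower \<theta> p) + Lam (K \<inter> stit_upper \<theta> p)"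
proof -
  have c1: "compact (K \<inter> stit_lower \<theta> p)" using assms closed_lower compact_Int_closed by blast
  have c2: "compact (K \<inter> stit_upper \<theta> p)" using assms closed_upper compact_Int_closed by blast
  have sub: "hitting K \<subseteq> hitting (K \<inter> stit_lower \<theta> p) \<union> hitting (K \<inter> stit_upper \<theta> p)"
    unfolding hitting_def stit_lower_def stit_upper_def by force
  have "measure lborel (hitting K) \<le> measure lborel (hitting (K \<inter> stit_lower \<theta> p) \<union> hitting (K \<inter> stit_upper \<theta> p))"
    apply (rule measure_mono_fmeasurable[OF sub])
    using hit_meas[OF assms] apply simp
    using hit_meas[OF c1] hit_meas[OF c2] by (intro fmeasurable.Un) (simp_all add: fmeasurable_def)
  also have "\<dots> \<le> measure lborel (hitting (K \<inter> stit_lower \<theta> p)) + measure lborel (hitting (K \<inter> stit_upper \<theta> p))"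
    using hit_meas[OF c1] hit_meas[OF c2] by (intro measure_subadditive) auto
  finally show ?thesis unfolding Lam_def add_divide_distrib[symmetric] by (rule divide_right_mono) simp
qed

definition ff :: "complex set \<Rightarrow> complex set \<Rightarrow> real \<Rightarrow> ennreal" where
  "ff A z t = (if compact z \<and> 0 \<le> t then ennreal (exp (- Lam (A \<inter> z) * t)) else top)"

lemma Lam_nonneg: "0 \<le> Lam z" unfolding Lam_def by simp

lemma inner_bound:
  assumes A: "compact A" and z: "compact z" and s: "0 \<le> s" "s \<le> t"
  shows "indicator (hitting z) q *
            indicator {q. stit_line (fst q) (snd q) \<inter> z \<inter> A = {}} q *
            ennreal (exp (- Lam z * s) / pi) *
            ff A (z \<inter> stit_lower (fst q) (snd q)) (t - s) *
            ff A (z \<inter> stit_upper (fst q) (snd q)) (t - s)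
      \<le> ennreal (exp (- Lam z * s) / pi * exp (- Lam (A \<inter> z) * (t - s))) * indicator (hitting z - hitting (A \<inter> z)) q"
proof (cases "q \<in> hitting z \<and> stit_line (fst q) (snd q) \<inter> z \<inter> A = {}")
  case False thus ?thesis by (auto simp: indicator_def)
next
  case True
  obtain \<theta> p where q: "q = (\<theta>, p)" by force
  have qD: "q \<in> hitting z - hitting (A \<inter> z)" using True unfolding hitting_def by auto
  have K: "compact (A \<inter> z)" using A z by (simp add: compact_Int)
  have c1: "compact (z \<inter> stit_lower \<theta> p)" using z closed_lower compact_Int_closed by blast
  have c2: "compact (z \<inter> stit_upper \<theta> p)" using z closed_upper compact_Int_closed by blast
  have sa: "Lam (A \<inter> z) \<le> Lam (A \<inter> (z \<inter> stit_lower \<theta> p)) + Lam (A \<inter> (z \<inter> stit_upper \<theta> p))"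
    using Lam_subadd[OF K, of \<theta> p] by (simp add: Int_assoc)
  have "exp (- Lam (A \<inter> (z \<inter> stit_lower \<theta> p)) * (t - s)) * exp (- Lam (A \<inter> (z \<inter> stit_upper \<theta> p)) * (t - s))
        \<le> exp (- Lam (A \<inter> z) * (t - s))"
    unfolding exp_add[symmetric] using mult_left_mono[OF sa, of "t-s"] s by (intro exp_mono) (simp add: algebra_simps)
  hence "ff A (z \<inter> stit_lower \<theta> p) (t - s) * ff A (z \<inter> stit_upper \<theta> p) (t - s) \<le> ennreal (exp (- Lam (A \<inter> z) * (t - s)))"
    using c1 c2 s by (simp add: ff_def ennreal_mult'[symmetric] ennreal_leI)
  hence "ennreal (exp (- Lam z * s) / pi) * (ff A (z \<inter> stit_lower \<theta> p) (t - s) * ff A (z \<inter> stit_upper \<theta> p) (t - s))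
      \<le> ennreal (exp (- Lam z * s) / pi) * ennreal (exp (- Lam (A \<inter> z) * (t - s)))"
    by (rule mult_left_mono) simp
  thus ?thesis using True qD q
    by (simp add: ennreal_mult'[symmetric] mult.assoc)
qed

lemma super:
  assumes A: "compact A"
  shows "stit_step A (ff A) \<le> ff A"
proof (intro le_funI)
  fix z t
  show "stit_step A (ff A) z t \<le> ff A z t"
  proof (cases "compact z \<and> 0 \<le> t")
    case False thus ?thesis unfolding ff_def by (simp only: if_False) simp
  next
    case True
    hence z: "compact z" and t: "0 \<le> t" by auto
    define Lz where "Lz = Lam z"
    define g where "g = Lam (A \<inter> z)"
    define a where "a = Lz - g"
    define D where "D = hitting z - hitting (A \<inter> z)"
    have K: "compact (A \<inter> z)" using A z by (simp add: compact_Int)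
    have subh: "hitting (A \<inter> z) \<subseteq> hitting z" unfolding hitting_def by auto
    have mD: "measure lborel D = measure lborel (hitting z) - measure lborel (hitting (A \<inter> z))"
      unfolding D_def using hit_meas[OF z] hit_meas[OF K] subh by (intro measure_Diff) auto
    have fD: "D \<in> fmeasurable lborel" unfolding D_def
      using hit_meas[OF z] hit_meas[OF K] by (intro fmeasurable.Diff) (auto simp: fmeasurable_def)
    have eD: "emeasure lborel D = ennreal (pi * a)"
      using emeasure_eq_measure2[OF fD] mD unfolding a_def Lz_def g_def Lam_def by (simp add: right_diff_distrib)
    have a0: "0 \<le> a"
      using measure_mono_fmeasurable[OF subh] hit_meas[OF z] hit_meas[OF K]
      unfolding a_def Lz_def g_def Lam_def by (simp add: fmeasurable_def divide_right_mono)
    have g0: "0 \<le> g" unfolding g_def by (rule Lam_nonneg)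
    define h where "h s = a * exp (- g * t - a * s)" for s
    have inner: "(\<integral>\<^sup>+ q. indicator (hitting z) q *
            indicator {q. stit_line (fst q) (snd q) \<inter> z \<inter> A = {}} q *
            ennreal (exp (- Lam z * s) / pi) *
            ff A (z \<inter> stit_lower (fst q) (snd q)) (t - s) *
            ff A (z \<inter> stit_upper (fst q) (snd q)) (t - s) \<partial>lborel) \<le> ennreal (h s)"
      if s: "0 \<le> s" "s \<le> t" for s
    proof -
      have "(\<integral>\<^sup>+ q. indicator (hitting z) q *
            indicator {q. stit_line (fst q) (snd q) \<inter> z \<inter> A = {}} q *
            ennreal (exp (- Lam z * s) / pi) *
            ff A (z \<inter> stit_lower (fst q) (snd q)) (t - s) *
            ff A (z \<inter> stit_upper (fst q) (snd q)) (t - s) \<partial>lborel)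
         \<le> (\<integral>\<^sup>+ q. ennreal (exp (- Lam z * s) / pi * exp (- Lam (A \<inter> z) * (t - s))) * indicator D q \<partial>lborel)"
        unfolding D_def by (intro nn_integral_mono inner_bound[OF A z s])
      also have "\<dots> = ennreal (exp (- Lam z * s) / pi * exp (- Lam (A \<inter> z) * (t - s))) * emeasure lborel D"
        using fD by (intro nn_integral_cmult_indicator) (auto simp: fmeasurable_def)
      also have "\<dots> = ennreal (h s)"
        unfolding eD h_def Lz_def[symmetric] g_def[symmetric] using a0
        by (simp add: ennreal_mult'[symmetric] mult_exp_exp a_def algebra_simps diff_divide_distrib)
      finally show ?thesis .
    qed
    have "stit_step A (ff A) z t \<le> ennreal (exp (- Lz * t)) + (\<integral>\<^sup>+ s. ennreal (h s) * indicator {0..t} s \<partial>lborel)"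
      unfolding stit_step_def Lz_def
    proof (intro add_mono order_refl nn_integral_mono)
      fix s
      show "indicator {0..t} s *
        (\<integral>\<^sup>+ q. indicator (hitting z) q *
            indicator {q. stit_line (fst q) (snd q) \<inter> z \<inter> A = {}} q *
            ennreal (exp (- Lam z * s) / pi) *
            ff A (z \<inter> stit_lower (fst q) (snd q)) (t - s) *
            ff A (z \<inter> stit_upper (fst q) (snd q)) (t - s) \<partial>lborel) \<le> ennreal (h s) * indicator {0..t} s"
      proof (cases "s \<in> {0..t}")
        case True
        hence "(\<integral>\<^sup>+ q. indicator (hitting z) q *
            indicator {q. stit_line (fst q) (snd q) \<inter> z \<inter> A = {}} q *
            ennreal (exp (- Lam z * s) / pi) *
            ff A (z \<inter> stit_lower (fst q) (snd q)) (t - s) *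
            ff A (z \<inter> stit_upper (fst q) (snd q)) (t - s) \<partial>lborel) \<le> ennreal (h s)"
          by (intro inner) auto
        thus ?thesis using True by (simp only: indicator_simps mult_1 mult_1_right)
      qed simp
    qed
    also have "(\<integral>\<^sup>+ s. ennreal (h s) * indicator {0..t} s \<partial>lborel)
        = ennreal ((- exp (- g * t - a * t)) - (- exp (- g * t - a * 0)))"
    proof (rule nn_integral_FTC_Icc)
      show "h \<in> borel_measurable borel" unfolding h_def by measurable
      show "((\<lambda>s. - exp (- g * t - a * s)) has_real_derivative h x) (at x)" for x
        unfolding h_def by (auto intro!: derivative_eq_intros)
      show "0 \<le> h x" for x unfolding h_def using a0 by simp
    qed (use t in auto)
    also have "ennreal (exp (- Lz * t)) + ennreal ((- exp (- g * t - a * t)) - (- exp (- g * t - a * 0)))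
       = ennreal (exp (- g * t))"
    proof -
      have e: "exp (- g * t - a * t) = exp (- Lz * t)" unfolding a_def by (simp add: algebra_simps)
      have "exp (- g * t - a * t) \<le> exp (- g * t)" using a0 t by simp
      thus ?thesis using e by (simp add: ennreal_plus[symmetric] del: ennreal_plus)
    qed
    finally show ?thesis using True by (simp add: ff_def[of A z t] g_def)
  qed
qed

lemma piece_bound:
  fixes a b x y :: real
  assumes "x \<le> y"
  shows "\<bar>(a * sin y - b * cos y) - (a * sin x - b * cos x)\<bar> \<le> integral {x..y} (\<lambda>\<theta>. \<bar>a * cos \<theta> + b * sin \<theta>\<bar>)"
proof -
  have "((\<lambda>\<theta>. a * cos \<theta> + b * sin \<theta>) has_integral ((a * sin y - b * cos y) - (a * sin x - b * cos x))) {x..y}"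
    by (rule fundamental_theorem_of_calculus[OF assms])
       (auto intro!: derivative_eq_intros simp: has_real_derivative_iff_has_vector_derivative[symmetric])
  hence "integral {x..y} (\<lambda>\<theta>. a * cos \<theta> + b * sin \<theta>) = (a * sin y - b * cos y) - (a * sin x - b * cos x)"
    by (rule integral_unique)
  moreover have "norm (integral {x..y} (\<lambda>\<theta>. a * cos \<theta> + b * sin \<theta>)) \<le> integral {x..y} (\<lambda>\<theta>. \<bar>a * cos \<theta> + b * sin \<theta>\<bar>)"
    by (intro integral_norm_bound_integral integrable_continuous_interval continuous_intros) auto
  ultimately show ?thesis by simp
qed

lemma abs_int_bound:
  fixes a b :: real
  shows "2 * sqrt (a\<^sup>2 + b\<^sup>2) \<le> integral {0..pi} (\<lambda>\<theta>. \<bar>a * cos \<theta> + b * sin \<theta>\<bar>)"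
proof -
  let ?f = "\<lambda>\<theta>. a * cos \<theta> + b * sin \<theta>"
  let ?F = "\<lambda>\<theta>. a * sin \<theta> - b * cos \<theta>"
  have cont: "continuous_on {0..pi} ?f" by (intro continuous_intros)
  obtain t0 where t0: "0 \<le> t0" "t0 \<le> pi" "?f t0 = 0"
  proof (cases "0 \<le> a")
    case True
    thus ?thesis using IVT2'[of ?f pi 0 0, OF _ _ _ cont] that by auto
  next
    case False
    thus ?thesis using IVT'[of ?f 0 0 pi, OF _ _ _ cont] that by auto
  qed
  have "(?F t0)\<^sup>2 = (?F t0)\<^sup>2 + (?f t0)\<^sup>2" using t0 by simp
  also have "\<dots> = (a\<^sup>2 + b\<^sup>2) * ((sin t0)\<^sup>2 + (cos t0)\<^sup>2)"
    unfolding power2_eq_square by algebra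
  also have "\<dots> = a\<^sup>2 + b\<^sup>2" by (simp only: sin_cos_squared_add mult_1_right)
  finally have Fd: "\<bar>?F t0\<bar> = sqrt (a\<^sup>2 + b\<^sup>2)" by (metis real_sqrt_abs)
  have "integral {0..t0} (\<lambda>\<theta>. \<bar>?f \<theta>\<bar>) + integral {t0..pi} (\<lambda>\<theta>. \<bar>?f \<theta>\<bar>) = integral {0..pi} (\<lambda>\<theta>. \<bar>?f \<theta>\<bar>)"
    by (rule Henstock_Kurzweil_Integration.integral_combine[OF t0(1) t0(2)]) (intro integrable_continuous_interval continuous_intros)
  moreover have "\<bar>?F t0 - ?F 0\<bar> \<le> integral {0..t0} (\<lambda>\<theta>. \<bar>?f \<theta>\<bar>)" using piece_bound t0 by blast
  moreover have "\<bar>?F pi - ?F t0\<bar> \<le> integral {t0..pi} (\<lambda>\<theta>. \<bar>?f \<theta>\<bar>)" using piece_bound t0 by blast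
  ultimately show ?thesis using Fd by simp
qed

lemma slice_meas_le:
  fixes u v r :: real
  assumes r: "0 < r" and uv: "u \<le> v"
  shows "ennreal (2*r + min (2*r) \<bar>u - v\<bar>) \<le> emeasure lborel {p. \<bar>p - u\<bar> \<le> r \<or> \<bar>p - v\<bar> \<le> r}"
proof -
  define m where "m = max (u + r) (v - r)"
  have disj: "{u-r..u+r} \<inter> {m<..v+r} = {}" unfolding m_def by auto
  have sub: "{u-r..u+r} \<union> {m<..v+r} \<subseteq> {p. \<bar>p - u\<bar> \<le> r \<or> \<bar>p - v\<bar> \<le> r}"
    unfolding m_def by auto
  have mv: "m \<le> v + r" unfolding m_def using uv r by auto
  have "emeasure lborel ({u-r..u+r} \<union> {m<..v+r}) = emeasure lborel {u-r..u+r} + emeasure lborel {m<..v+r}"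
    using disj by (intro plus_emeasure[symmetric]) auto
  also have "\<dots> = ennreal (2*r) + ennreal (v + r - m)" using r mv by simp
  also have "\<dots> = ennreal (2*r + (v + r - m))"
    using r mv by (subst ennreal_plus) auto
  also have "v + r - m = min (2*r) \<bar>u - v\<bar>"
    using r uv unfolding m_def by (auto simp: max_def min_def)
  finally have E: "emeasure lborel ({u-r..u+r} \<union> {m<..v+r}) = ennreal (2*r + min (2*r) \<bar>u - v\<bar>)" .
  have "{p. \<bar>p - u\<bar> \<le> r \<or> \<bar>p - v\<bar> \<le> r} = {u-r..u+r} \<union> {v-r..v+r}" by auto
  thus ?thesis using emeasure_mono[OF sub, of lborel] E by simp
qed

lemma slice_meas:
  fixes u v r :: real
  assumes r: "0 < r"
  shows "ennreal (2*r + min (2*r) \<bar>u - v\<bar>) \<le> emeasure lborel {p. \<bar>p - u\<bar> \<le> r \<or> \<bar>p - v\<bar> \<le> r}"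
proof (cases "u \<le> v")
  case True thus ?thesis using slice_meas_le[OF r] by blast
next
  case False
  hence "ennreal (2*r + min (2*r) \<bar>v - u\<bar>) \<le> emeasure lborel {p. \<bar>p - v\<bar> \<le> r \<or> \<bar>p - u\<bar> \<le> r}"
    using slice_meas_le[OF r, of v u] by simp
  moreover have "{p. \<bar>p - v\<bar> \<le> r \<or> \<bar>p - u\<bar> \<le> r} = {p. \<bar>p - u\<bar> \<le> r \<or> \<bar>p - v\<bar> \<le> r}" by auto
  ultimately show ?thesis by (simp add: abs_minus_commute)
qed

lemma S0_sub:
  "{q. fst q \<in> {0..<pi} \<and> (\<bar>snd q - c1 \<bullet> cis (fst q)\<bar> \<le> r \<or> \<bar>snd q - c2 \<bullet> cis (fst q)\<bar> \<le> r)}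
     \<subseteq> hitting (cball c1 r \<union> cball c2 r)"
proof
  fix q assume q: "q \<in> {q. fst q \<in> {0..<pi} \<and> (\<bar>snd q - c1 \<bullet> cis (fst q)\<bar> \<le> r \<or> \<bar>snd q - c2 \<bullet> cis (fst q)\<bar> \<le> r)}"
  obtain \<theta> p where qq: "q = (\<theta>, p)" by force
  have key: "\<exists>x. x \<bullet> cis \<theta> = p \<and> dist c x \<le> r" if "\<bar>p - c \<bullet> cis \<theta>\<bar> \<le> r" for c
  proof (intro exI conjI)
    let ?x = "c + (p - c \<bullet> cis \<theta>) *\<^sub>R cis \<theta>"
    have cc: "cis \<theta> \<bullet> cis \<theta> = 1" by (simp add: inner_complex_def power2_eq_square[symmetric])
    show "?x \<bullet> cis \<theta> = p"
      by (simp add: inner_add_left cc)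
    show "dist c ?x \<le> r" using that by (simp add: dist_norm)
  qed
  from q have th: "0 \<le> \<theta>" "\<theta> < pi" and pc: "\<bar>p - c1 \<bullet> cis \<theta>\<bar> \<le> r \<or> \<bar>p - c2 \<bullet> cis \<theta>\<bar> \<le> r"
    unfolding qq by auto
  from pc obtain x where x: "x \<bullet> cis \<theta> = p" "x \<in> cball c1 r \<union> cball c2 r"
    using key[of c1] key[of c2] by (auto simp: mem_cball)
  show "q \<in> hitting (cball c1 r \<union> cball c2 r)"
    unfolding qq hitting_def stit_line_def using th x by auto
qed

lemma hitA_bound:
  assumes r: "0 < r" and d: "2*r \<le> dist c1 c2"
  shows "ennreal (2*pi*r + 4*r) \<le> emeasure lborel (hitting (cball c1 r \<union> cball c2 r))"
proof -
  define S0 where "S0 = {q::real\<times>real. fst q \<in> {0..<pi} \<and> (\<bar>snd q - c1 \<bullet> cis (fst q)\<bar> \<le> r \<or> \<bar>snd q - c2 \<bullet> cis (fst q)\<bar> \<le> r)}"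
  define dd where "dd = dist c1 c2"
  define k where "k = 2*r/dd"
  define a where "a = Re (c1 - c2)"
  define b where "b = Im (c1 - c2)"
  define f where "f \<theta> = a * cos \<theta> + b * sin \<theta>" for \<theta>
  define g where "g \<theta> = 2*r + k * \<bar>f \<theta>\<bar>" for \<theta>
  have dd0: "0 < dd" using r d unfolding dd_def by linarith
  have k0: "0 \<le> k" "k \<le> 1" using r d dd0 unfolding k_def dd_def by auto
  have ddab: "sqrt (a\<^sup>2 + b\<^sup>2) = dd" unfolding dd_def a_def b_def by (simp add: dist_norm cmod_def)
  have fuv: "c1 \<bullet> cis \<theta> - c2 \<bullet> cis \<theta> = f \<theta>" for \<theta>
    unfolding f_def a_def b_def by (simp add: inner_complex_def algebra_simps)
  have fle: "\<bar>f \<theta>\<bar> \<le> dd" for \<theta>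
  proof -
    have "\<bar>(c1 - c2) \<bullet> cis \<theta>\<bar> \<le> norm (c1 - c2) * norm (cis \<theta>)" by (rule Cauchy_Schwarz_ineq2)
    thus ?thesis using fuv[of \<theta>] unfolding dd_def by (simp add: inner_diff_left dist_norm)
  qed
  have S0m: "S0 \<in> sets borel"
  proof -
    have eq: "S0 = ({q. 0 \<le> fst q} \<inter> {q. fst q < pi}) \<inter>
       ({q. \<bar>snd q - c1 \<bullet> cis (fst q)\<bar> \<le> r} \<union> {q. \<bar>snd q - c2 \<bullet> cis (fst q)\<bar> \<le> r})"
      unfolding S0_def by auto
    have "closed {q::real\<times>real. 0 \<le> fst q}" by (intro closed_Collect_le continuous_intros)
    moreover have "open {q::real\<times>real. fst q < pi}" by (intro open_Collect_less continuous_intros)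
    moreover have "closed {q::real\<times>real. \<bar>snd q - c1 \<bullet> cis (fst q)\<bar> \<le> r}" by (intro closed_Collect_le continuous_intros)
    moreover have "closed {q::real\<times>real. \<bar>snd q - c2 \<bullet> cis (fst q)\<bar> \<le> r}" by (intro closed_Collect_le continuous_intros)
    ultimately show ?thesis unfolding eq by (intro sets.Int sets.Un borel_closed borel_open)
  qed
  have "emeasure lborel S0 = emeasure (lborel \<Otimes>\<^sub>M lborel) S0" by (simp add: lborel_prod)
  also have "\<dots> = (\<integral>\<^sup>+\<theta>. emeasure lborel (Pair \<theta> -` S0) \<partial>lborel)"
    using S0m by (intro lborel.emeasure_pair_measure_alt) (metis borel_prod sets_lborel sets_pair_measure_cong)
  also have "\<dots> \<ge> (\<integral>\<^sup>+\<theta>. ennreal (g \<theta>) * indicator {0..<pi} \<theta> \<partial>lborel)"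
  proof (intro nn_integral_mono)
    fix \<theta> :: real
    show "ennreal (g \<theta>) * indicator {0..<pi} \<theta> \<le> emeasure lborel (Pair \<theta> -` S0)"
    proof (cases "\<theta> \<in> {0..<pi}")
      case True
      have "g \<theta> \<le> 2*r + min (2*r) \<bar>c1 \<bullet> cis \<theta> - c2 \<bullet> cis \<theta>\<bar>"
      proof -
        have "k * \<bar>f \<theta>\<bar> \<le> \<bar>f \<theta>\<bar>" using k0 by (simp add: mult_left_le_one_le)
        moreover have "k * \<bar>f \<theta>\<bar> \<le> k * dd" using k0 fle by (simp add: mult_left_mono)
        moreover have "k * dd = 2*r" unfolding k_def using dd0 by simp
        ultimately show ?thesis unfolding g_def fuv by simp
      qed
      hence "ennreal (g \<theta>) \<le> emeasure lborel {p. \<bar>p - c1 \<bullet> cis \<theta>\<bar> \<le> r \<or> \<bar>p - c2 \<bullet> cis \<theta>\<bar> \<le> r}"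
        using slice_meas[OF r] order_trans ennreal_leI by blast
      moreover have "Pair \<theta> -` S0 = {p. \<bar>p - c1 \<bullet> cis \<theta>\<bar> \<le> r \<or> \<bar>p - c2 \<bullet> cis \<theta>\<bar> \<le> r}"
        using True unfolding S0_def by auto
      ultimately show ?thesis using True by simp
    qed simp
  qed
  also have "(\<integral>\<^sup>+\<theta>. ennreal (g \<theta>) * indicator {0..<pi} \<theta> \<partial>lborel)
       = (\<integral>\<^sup>+\<theta>. indicator {0..pi} \<theta> * g \<theta> \<partial>lborel)"
    by (intro nn_integral_cong_AE eventually_mono[OF AE_lborel_singleton[of pi]])
       (auto simp: indicator_def)
  also have "\<dots> = ennreal (integral {0..pi} g)"
  proof (rule nn_integral_has_integral_lebesgue)
    show "0 \<le> g x" for x unfolding g_def using r k0 by simp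
    show "(g has_integral integral {0..pi} g) {0..pi}" unfolding g_def f_def
      by (intro integrable_integral integrable_continuous_interval continuous_intros)
  qed
  also have "integral {0..pi} g = 2*r*pi + k * integral {0..pi} (\<lambda>\<theta>. \<bar>f \<theta>\<bar>)"
  proof -
    have i1: "(\<lambda>\<theta>. \<bar>f \<theta>\<bar>) integrable_on {0..pi}" unfolding f_def
      by (intro integrable_continuous_interval continuous_intros)
    have "integral {0..pi} g = integral {0..pi} (\<lambda>\<theta>. 2*r) + integral {0..pi} (\<lambda>\<theta>. k * \<bar>f \<theta>\<bar>)"
      unfolding g_def by (intro Henstock_Kurzweil_Integration.integral_add integrable_continuous_interval continuous_intros) (simp_all add: f_def continuous_intros)
    thus ?thesis using i1 by (simp add: mult.commute)
  qed
  finally have E: "ennreal (2*r*pi + k * integral {0..pi} (\<lambda>\<theta>. \<bar>f \<theta>\<bar>)) \<le> emeasure lborel S0" .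
  have "2*pi*r + 4*r \<le> 2*r*pi + k * integral {0..pi} (\<lambda>\<theta>. \<bar>f \<theta>\<bar>)"
  proof -
    have "2 * dd \<le> integral {0..pi} (\<lambda>\<theta>. \<bar>f \<theta>\<bar>)" using abs_int_bound[of a b] unfolding f_def ddab .
    hence "k * (2 * dd) \<le> k * integral {0..pi} (\<lambda>\<theta>. \<bar>f \<theta>\<bar>)" using k0(1) by (rule mult_left_mono)
    moreover have "k * (2*dd) = 4*r" unfolding k_def using dd0 by simp
    ultimately show ?thesis by simp
  qed
  hence "ennreal (2*pi*r + 4*r) \<le> emeasure lborel S0" using E ennreal_leI order_trans by blast
  also have "\<dots> \<le> emeasure lborel (hitting (cball c1 r \<union> cball c2 r))"
    using S0_sub[of c1 r c2] hit_meas[of "cball c1 r \<union> cball c2 r"]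
    unfolding S0_def by (intro emeasure_mono) (auto simp: compact_Un)
  finally show ?thesis .
qed

theorem lemma3p1:
  shows "\<exists>\<eta>>0. \<forall>r>0. \<forall>c1 c2 :: complex. \<forall>V :: complex set.
     dist c1 c2 \<ge> 2 * r \<longrightarrow> finite V \<longrightarrow>
     cball c1 r \<union> cball c2 r \<subseteq> interior (convex hull V) \<longrightarrow>
     stit_avoid_prob (convex hull V) 1 (cball c1 r \<union> cball c2 r)
       \<le> ennreal (\<eta> * exp (- 2 * (1 + 2 / pi) * r))"
proof (intro exI[of _ 1] conjI allI impI)
  fix r :: real and c1 c2 :: complex and V :: "complex set"
  assume r: "0 < r" and d: "2 * r \<le> dist c1 c2" and V: "finite V"
    and sub: "cball c1 r \<union> cball c2 r \<subseteq> interior (convex hull V)"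
  define A where "A = cball c1 r \<union> cball c2 r"
  have cA: "compact A" unfolding A_def by (simp add: compact_Un)
  have cW: "compact (convex hull V)" using V by (simp add: compact_convex_hull finite_imp_compact)
  have AW: "A \<inter> convex hull V = A" using sub interior_subset unfolding A_def by blast
  have "stit_avoid_prob (convex hull V) 1 A \<le> ff A (convex hull V) 1"
    unfolding stit_avoid_prob_def using lfp_lowerbound[of "stit_step A" "ff A", OF super[OF cA]] by (auto dest: le_funD)
  also have "\<dots> = ennreal (exp (- Lam A))" using cW AW by (simp add: ff_def)
  also have "\<dots> \<le> ennreal (1 * exp (- 2 * (1 + 2 / pi) * r))"
  proof (intro ennreal_leI)
    have hf: "hitting A \<in> fmeasurable lborel" using hit_meas[OF cA] by (simp add: fmeasurable_def)
    have "ennreal (2*pi*r + 4*r) \<le> ennreal (measure lborel (hitting A))"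
      using hitA_bound[OF r d] emeasure_eq_measure2[OF hf] unfolding A_def by simp
    hence "2*pi*r + 4*r \<le> measure lborel (hitting A)" by (simp add: ennreal_le_iff)
    hence "(2*pi*r + 4*r) / pi \<le> Lam A" unfolding Lam_def by (simp add: divide_right_mono)
    moreover have "(2*pi*r + 4*r) / pi = 2 * (1 + 2 / pi) * r" by (simp add: field_simps)
    ultimately show "exp (- Lam A) \<le> 1 * exp (- 2 * (1 + 2 / pi) * r)" by (simp add: algebra_simps)
  qed
  finally show "stit_avoid_prob (convex hull V) 1 (cball c1 r \<union> cball c2 r)
       \<le> ennreal (1 * exp (- 2 * (1 + 2 / pi) * r))" unfolding A_def .
qed simp

end
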